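(* For integers $n\ge k\ge 0$ let $P(n,k)=k!\,[2(n-k)-1]!!\,\binom{2n-k-1}{2(n-k)}$. Then for all $k,\ell\in\{0,1,2,\dots\}$, \[ \sum_{m=0}^{k}(-1)^{m}\binom{k}{m}\binom{m/2}{\ell}= \begin{cases}0, & k>\ell,\\[2pt] \dfrac{(-1)^{\ell}}{(2\ell)!!}P(\ell,k), & \ell\ge k.\end{cases} \]
   Context: Here $\binom{x}{\ell}=\frac{x(x-1)\cdots(x-\ell+1)}{\ell!}$ for real $x$. Double factorials: $(2j)!!=2^j j!$, with $0!!=1$, and $(2j-1)!!=1\cdot3\cdots(2j-1)$ for $j\ge1$, with $(-1)!!=1$. The binomial coefficient $\binom{2n-k-1}{2(n-k)}$ equals $1$ when $n=k$, including the case $n=k=0$, where it is $\binom{-1}{0}=1$. *)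

theory Defs
  imports Complex_Main
begin

text \<open>Double factorial of an odd number: odd_dfact j = (2j-1)!! = 1*3*...*(2j-1), with odd_dfact 0 = (-1)!! = 1.\<close>
definition odd_dfact :: "nat \<Rightarrow> nat" where
  "odd_dfact j = (\<Prod>i\<in>{1..j}. 2 * i - 1)"

text \<open>Double factorial of an even number: even_dfact j = (2j)!! = 2^j j!.\<close>
definition even_dfact :: "nat \<Rightarrow> nat" where
  "even_dfact j = 2 ^ j * fact j"

text \<open>P(n,k) = k! [2(n-k)-1]!! binom(2n-k-1, 2(n-k)), for n \<ge> k; the binomial uses
  the generalized coefficient with real upper argument, so binom(-1,0) = 1.\<close>
definition P :: "nat \<Rightarrow> nat \<Rightarrow> real" where
  "P n k = fact k * real (odd_dfact (n - k))
           * ((2 * real n - real k - 1) gchoose (2 * (n - k)))"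

end

theory Submission
  imports Defs
begin

definition D :: "nat \<Rightarrow> (nat \<Rightarrow> real) \<Rightarrow> real" where
  "D k f = (\<Sum>m\<le>k. (-1) ^ m * real (k choose m) * f m)"

lemma D_Suc: "D (Suc k) f = D k f - D k (\<lambda>m. f (Suc m))"
proof -
  define h where "h m = (-1::real) ^ m * real (k choose m) * f m" for m
  have a: "(\<Sum>m\<le>Suc k. h m) = D k f" by (simp add: h_def D_def)
  have b: "(\<Sum>m\<le>Suc k. h m) = h 0 + (\<Sum>m\<le>k. h (Suc m))"
    by (rule sum.atMost_Suc_shift)
  have "D (Suc k) f = f 0 + (\<Sum>m\<le>k. (-1) ^ Suc m * real (Suc k choose Suc m) * f (Suc m))"
    unfolding D_def by (subst sum.atMost_Suc_shift) simp
  also have "\<dots> = f 0 + (\<Sum>m\<le>k. h (Suc m)) - D k (\<lambda>m. f (Suc m))"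
    by (simp add: D_def h_def sum_subtractf[symmetric] sum.distrib[symmetric] algebra_simps)
  finally show ?thesis using a b by (simp add: h_def)
qed

lemma D_add: "D k (\<lambda>m. f m + g m) = D k f + D k g"
  by (simp add: D_def sum.distrib[symmetric] algebra_simps)

definition g :: "nat \<Rightarrow> nat \<Rightarrow> real" where "g l m = (real m / 2) gchoose l"

lemma g_shift2: "g (Suc l) (Suc (Suc m)) = g (Suc l) m + g l m"
proof -
  have "real (Suc (Suc m)) / 2 = real m / 2 + 1" by simp
  then show ?thesis unfolding g_def by (simp only: gbinomial_Suc_Suc)
qed

lemma T_rec: "D (Suc (Suc k)) (g (Suc l)) = 2 * D (Suc k) (g (Suc l)) + D k (g l)"
proof -
  have "D k (\<lambda>m. g (Suc l) (Suc (Suc m))) = D k (g (Suc l)) + D k (g l)"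
    using D_add[of k "g (Suc l)" "g l"] by (simp add: g_shift2)
  then show ?thesis by (simp add: D_Suc)
qed

lemma D_0: "D 0 f = f 0" by (simp add: D_def)

lemma D_g0: "D k (g 0) = (if k = 0 then 1 else 0)"
  using choose_alternating_sum[of k, where 'a=real] by (simp add: D_def g_def)


lemma gch_step: "(a::real) gchoose (Suc k) = (a gchoose k) * (a - real k) / real (Suc k)"
proof -
  have h: "fact (Suc k) * (a gchoose Suc k) = fact k * (a gchoose k) * (a - real k)"
    by (simp only: gbinomial_mult_fact prod.atLeastLessThan_Suc)
  have "fact k * ((real k + 1) * (a gchoose Suc k)) = fact k * ((a gchoose k) * (a - real k))"
    using h by (simp add: algebra_simps)
  then have "(real k + 1) * (a gchoose Suc k) = (a gchoose k) * (a - real k)"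
    by simp
  then show ?thesis by (simp add: field_simps)
qed

lemma half_gch: "(1/2::real) gchoose (Suc j) =
   (-1) ^ j * fact (2*j) / (2 ^ (2*j+1) * fact (Suc j) * fact j)"
proof (induction j)
  case 0 then show ?case by simp
next
  case (Suc j)
  define A :: real where "A = fact (2*j)"
  define B :: real where "B = fact j"
  define p :: real where "p = 2 ^ (2*j)"
  have pos: "A > 0" "B > 0" "p > 0" by (auto simp: A_def B_def p_def)
  define r :: real where "r = real j + 1"
  have rpos: "r > 0" by (simp add: r_def)
  have e1: "fact (2 * Suc j) = (2*r)*(2*r-1)* A"
    by (simp add: algebra_simps A_def r_def)
  have e2: "fact (Suc (Suc j)) = (r+1)*r* B"
    by (simp add: algebra_simps B_def r_def)
  have e3: "fact (Suc j) = r* B"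
    by (simp add: algebra_simps B_def r_def)
  have e4: "(2::real) ^ (2*Suc j+1) = 8*p" "(2::real) ^ (2*j+1) = 2*p"
    by (simp_all add: p_def power_add)
  have e5: "real (Suc j) = r" "real (Suc (Suc j)) = r + 1" by (simp_all add: r_def)
  have IH: "(1/2::real) gchoose (Suc j) = (-1) ^ j * A / (2*p * (r*B) * B)"
    using Suc.IH e3 e4 by (simp add: A_def B_def)
  show ?case
    apply (subst gch_step, subst IH)
    apply (simp only: e1 e2 e3 e4 e5 B_def[symmetric])
    using pos rpos apply (simp add: field_simps)
    apply (subst frac_eq_eq)
    apply (rule not_sym, rule less_imp_neq)
    using pos rpos apply (intro add_pos_pos mult_pos_pos; simp)
    apply (rule not_sym, rule less_imp_neq)
    using pos rpos apply (intro add_pos_pos mult_pos_pos; simp)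
    apply (simp add: algebra_simps)
    done
qed

lemma odd_dfact_fact: "real (odd_dfact j) * (2 ^ j * fact j) = fact (2*j)"
proof (induction j)
  case 0 then show ?case by (simp add: odd_dfact_def)
next
  case (Suc j)
  have "odd_dfact (Suc j) = odd_dfact j * (2 * j + 1)"
    unfolding odd_dfact_def by (simp add: prod.nat_ivl_Suc')
  moreover have "fact (2 * Suc j) = (2*real j+2)*(2*real j+1)* (fact (2*j) :: real)"
    by (simp add: algebra_simps)
  ultimately show ?case using Suc.IH[symmetric] by (simp add: algebra_simps)
qed


definition R :: "nat \<Rightarrow> nat \<Rightarrow> real" where
  "R k l = (if k > l then 0 else (-1) ^ l / real (even_dfact l) * P l k)"

definition H :: "nat \<Rightarrow> nat \<Rightarrow> real" where
  "H k j = (-1) ^ (k+1+j) * real (k+1) * fact (k+2*j) / (2 ^ (k+1+2*j) * fact (k+1+j) * fact j)"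

lemma R_H: "R (Suc k) (Suc k + j) = H k j"
proof -
  have r: "2 * real (Suc k + j) - real (Suc k) - 1 = real (k + 2*j)" by simp
  have c: "real (k + 2*j) gchoose (2*j) = fact (k+2*j) / (fact (2*j) * fact k)"
    by (subst binomial_gbinomial[symmetric]) (simp add: binomial_fact)
  have d: "Suc k + j - Suc k = j" by simp
  have o: "real (odd_dfact j) = fact (2*j) / (2 ^ j * fact j)"
    using odd_dfact_fact[of j] by (simp add: field_simps)
  have "P (Suc k + j) (Suc k) = real (Suc k) * fact (k+2*j) / (2 ^ j * fact j)"
    unfolding P_def r d c o by (simp add: field_simps)
  then have "R (Suc k) (Suc k + j) = (-1)^(Suc k+j) / (2^(Suc k+j) * fact (Suc k+j))
      * (real (Suc k) * fact (k+2*j) / (2^j * fact j))"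
    by (simp add: R_def even_dfact_def del: fact_Suc)
  also have "\<dots> = H k j"
  proof -
    have p: "(2::real)^(k+1+2*j) = 2^(Suc k+j)*2^j" by (simp add: power_add[symmetric])
    have q: "k+1+j = Suc k + j" "(-1::real)^(k+1+j) = (-1)^(Suc k+j)" by simp_all
    show ?thesis unfolding H_def p q by (simp del: fact_Suc add: field_simps)
  qed
  finally show ?thesis .
qed

lemma R_diag: "R l l = (-1) ^ l / 2 ^ l"
  by (simp add: R_def P_def odd_dfact_def even_dfact_def)

lemma R_0: "R 0 l = (if l = 0 then 1 else 0)"
proof (cases l)
  case 0 then show ?thesis by (simp add: R_diag)
next
  case (Suc j)
  have r: "2 * real (Suc j) - real 0 - 1 = real (2*j+1)" by simp
  have "real (2*j+1) gchoose (2 * (Suc j - 0)) = 0"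
    by (subst binomial_gbinomial[symmetric], subst binomial_eq_0) auto
  then show ?thesis using Suc unfolding R_def P_def r by simp
qed

lemma R_1: "R 1 l = (if l = 0 then 1 else 0) - g l 1"
proof (cases l)
  case 0 then show ?thesis by (simp add: R_def g_def)
next
  case (Suc j)
  have "R 1 l = H 0 j" using R_H[of 0 j] Suc by simp
  then show ?thesis using Suc half_gch[of j]
    by (simp add: H_def g_def field_simps)
qed


lemma H1: "H (Suc 0) j = 2 * H 0 (Suc j)"
proof -
  define F :: real where "F = fact (2*j+1)"
  define B :: real where "B = fact j"
  define p :: real where "p = 2 ^ (2*j)"
  define s :: real where "s = (-1) ^ j"
  define u :: real where "u = real j + 1"
  define v :: real where "v = real j + 2"
  have pos: "F > 0" "B > 0" "p > 0" "u > 0" "v > 0" by (auto simp: F_def B_def p_def u_def v_def)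
  have e: "H (Suc 0) j = s * 2 * F / (4 * p * (v * u * B) * B)"
    by (simp add: H_def F_def B_def p_def s_def u_def v_def power_add algebra_simps)
  have e2: "H 0 (Suc j) = s * (2*u) * F / (8 * p * (v * u * B) * (u * B))"
    by (simp add: H_def F_def B_def p_def s_def u_def v_def power_add algebra_simps)
  show ?thesis unfolding e e2 using pos by (simp add: field_simps)
qed

lemma H2: "H (Suc (Suc k)) j = 2 * H (Suc k) (Suc j) + H k (Suc j)"
proof -
  define F :: real where "F = fact (k+2*j+2)"
  define G :: real where "G = fact (k+j+2)"
  define B :: real where "B = fact j"
  define p :: real where "p = 2 ^ (k+2*j)"
  define s :: real where "s = (-1) ^ (k+j)"
  define u :: real where "u = real j + 1"
  define w :: real where "w = real k + real j + 3"
  define a :: real where "a = real k"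
  have pos: "F > 0" "G > 0" "B > 0" "p > 0" "u > 0" "w > 0"
    by (auto simp: F_def G_def B_def p_def u_def w_def)
  have e: "H (Suc (Suc k)) j = - s * (a+3) * F / (8 * p * (w * G) * B)"
    by (simp add: H_def F_def G_def B_def p_def s_def u_def w_def a_def power_add algebra_simps)
  have e2: "H (Suc k) (Suc j) = - s * (a+2) * ((a + 2*u + 1) * F) / (16 * p * (w * G) * (u * B))"
    by (simp add: H_def F_def G_def B_def p_def s_def u_def w_def a_def power_add algebra_simps)
  have e3: "H k (Suc j) = s * (a+1) * F / (8 * p * G * (u * B))"
    by (simp add: H_def F_def G_def B_def p_def s_def u_def w_def a_def power_add algebra_simps)
  have wu: "w = a + u + 2" by (simp add: w_def a_def u_def)
  show ?thesis unfolding e e2 e3 using pos by (simp add: field_simps) (simp add: wu algebra_simps)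
qed


lemma R_rec: "R (Suc (Suc k)) (Suc l) = 2 * R (Suc k) (Suc l) + R k l"
proof (cases "k \<le> l")
  case False then show ?thesis by (simp add: R_def)
next
  case True
  show ?thesis
  proof (cases "k = l")
    case True then show ?thesis
      using R_diag[of l] R_diag[of "Suc l"] by (simp add: R_def)
  next
    case False
    with True have "k < l" by simp
    then obtain j where l: "l = Suc (k + j)" using less_imp_Suc_add by blast
    have a: "R (Suc (Suc k)) (Suc l) = H (Suc k) j"
      using R_H[of "Suc k" j] l by simp
    have b: "R (Suc k) (Suc l) = H k (Suc j)"
      using R_H[of k "Suc j"] l by simp
    show ?thesis
    proof (cases k)
      case 0 then show ?thesis using a b H1[of j] l R_0[of l] by simp
    next
      case (Suc k')
      have "R k l = H k' (Suc j)" using R_H[of k' "Suc j"] l Suc by simp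
      then show ?thesis using a b H2[of k' j] Suc by simp
    qed
  qed
qed

lemma main: "D k (g l) = R k l"
proof (induction k arbitrary: l rule: less_induct)
  case (less k)
  show ?case
  proof (cases k)
    case 0 then show ?thesis by (simp add: D_0 R_0 g_def gbinomial_0_left)
  next
    case (Suc k1)
    show ?thesis
    proof (cases k1)
      case 0
      have "D 1 (g l) = g l 0 - g l 1" by (simp add: D_def)
      also have "\<dots> = R 1 l" using R_1[of l] by (simp add: g_def gbinomial_0_left)
      finally show ?thesis using Suc 0 by simp
    next
      case (Suc k2)
      show ?thesis
      proof (cases l)
        case 0 then show ?thesis using D_g0[of k] \<open>k = Suc k1\<close> by (simp add: R_def)
      next
        case (Suc l1)
        have "D k (g l) = 2 * D (Suc k2) (g (Suc l1)) + D k2 (g l1)"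
          using T_rec[of k2 l1] \<open>k = Suc k1\<close> \<open>k1 = Suc k2\<close> Suc by simp
        also have "\<dots> = 2 * R (Suc k2) (Suc l1) + R k2 l1"
          using less.IH[of "Suc k2" "Suc l1"] less.IH[of k2 l1] \<open>k = Suc k1\<close> \<open>k1 = Suc k2\<close> by simp
        also have "\<dots> = R k l" using R_rec[of k2 l1] \<open>k = Suc k1\<close> \<open>k1 = Suc k2\<close> Suc by simp
        finally show ?thesis .
      qed
    qed
  qed
qed

theorem lemma2p2:
  fixes k l :: nat
  shows "(\<Sum>m=0..k. (-1) ^ m * real (k choose m) * ((real m / 2) gchoose l)) =
         (if k > l then 0 else (-1) ^ l / real (even_dfact l) * P l k)"
  using main[of k l] by (simp add: D_def g_def R_def atLeast0AtMost)

end
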